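(* For every $r\ge2$ there is a bijection between the set of partitions of the highest root $\tilde\alpha_{B_r}=\varepsilon_1+\varepsilon_2$ of type $B_r$ into positive roots of $B_r$ and the set $\mathrm{JS}(\langle1,1\rangle,\langle1,1\rangle,r)$. In particular $K_{B_r}(\tilde\alpha_{B_r})=\mathsf{js}(\langle1,1\rangle,\langle1,1\rangle,r)$.
   Context: The positive roots of type $B_r$ are $\Phi^+_{B_r}=\{\varepsilon_i-\varepsilon_j,\ \varepsilon_i+\varepsilon_j:1\le i<j\le r\}\cup\{\varepsilon_i:1\le i\le r\}\subset\mathbb{R}^r$; a partition of $\mu$ is a finite multiset of positive roots summing to $\mu$, and $K_{B_r}(\mu)$ is the number of them. A juggling state is a finitely supported integer vector $\langle s_1,s_2,\dots\rangle$ indexed by heights (trailing zeros omitted). A juggling sequence of length $n$ from $\mathbf{a}$ to $\mathbf{b}$ is a sequence $(\mathbf{s}_0,\dots,\mathbf{s}_n)$ with $\mathbf{s}_0=\mathbf{a}$, $\mathbf{s}_n=\mathbf{b}$ such that for each $i$ there are nonnegative integers $c^{(i)}_k$ (finitely many nonzero) with $\sum_k c^{(i)}_k=(\mathbf{s}_{i-1})_1$ and $(\mathbf{s}_i)_k=(\mathbf{s}_{i-1})_{k+1}+c^{(i)}_k$ for all $k\ge1$. $\mathrm{JS}(\mathbf{a},\mathbf{b},n)$ is the set of these and $\mathsf{js}$ its cardinality. *)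

theory Defs
  imports Main "HOL-Library.Multiset"
begin

text \<open>Vectors in R^r (with integer coordinates) are represented as functions
  nat => int; coordinate i (1 <= i <= r) is the value at i.\<close>

definition eps :: "nat \<Rightarrow> nat \<Rightarrow> int" where
  "eps i = (\<lambda>k. if k = i then 1 else 0)"

definition posroots_B :: "nat \<Rightarrow> (nat \<Rightarrow> int) set" where
  "posroots_B r =
     {(\<lambda>k. eps i k - eps j k) | i j. 1 \<le> i \<and> i < j \<and> j \<le> r}
   \<union> {(\<lambda>k. eps i k + eps j k) | i j. 1 \<le> i \<and> i < j \<and> j \<le> r}
   \<union> {eps i | i. 1 \<le> i \<and> i \<le> r}"

definition root_partitions_B :: "nat \<Rightarrow> (nat \<Rightarrow> int) \<Rightarrow> (nat \<Rightarrow> int) multiset set" where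
  "root_partitions_B r mu =
     {M. set_mset M \<subseteq> posroots_B r \<and> (\<lambda>k. \<Sum>\<^sub># (image_mset (\<lambda>v. v k) M)) = mu}"

definition K_B :: "nat \<Rightarrow> (nat \<Rightarrow> int) \<Rightarrow> nat" where
  "K_B r mu = card (root_partitions_B r mu)"

definition highest_root_B :: "nat \<Rightarrow> int" where
  "highest_root_B = (\<lambda>k. eps 1 k + eps 2 k)"

text \<open>Juggling states: finitely supported integer vectors indexed by heights 1,2,...;
  represented as nat => int with value 0 at the unused index 0.\<close>
definition juggling_state :: "(nat \<Rightarrow> int) \<Rightarrow> bool" where
  "juggling_state s \<longleftrightarrow> s 0 = 0 \<and> finite {k. s k \<noteq> 0}"

definition juggling_step :: "(nat \<Rightarrow> int) \<Rightarrow> (nat \<Rightarrow> int) \<Rightarrow> bool" where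
  "juggling_step s t \<longleftrightarrow>
     (\<exists>c :: nat \<Rightarrow> nat. finite {k. c k \<noteq> 0} \<and> c 0 = 0 \<and>
        int (\<Sum>k\<in>{k. c k \<noteq> 0}. c k) = s 1 \<and>
        (\<forall>k\<ge>1. t k = s (k + 1) + int (c k)))"

definition JS :: "(nat \<Rightarrow> int) \<Rightarrow> (nat \<Rightarrow> int) \<Rightarrow> nat \<Rightarrow> (nat \<Rightarrow> int) list set" where
  "JS a b n = {ss. length ss = Suc n \<and> ss ! 0 = a \<and> ss ! n = b \<and>
      (\<forall>i\<le>n. juggling_state (ss ! i)) \<and>
      (\<forall>i. 1 \<le> i \<and> i \<le> n \<longrightarrow> juggling_step (ss ! (i - 1)) (ss ! i))}"

definition js :: "(nat \<Rightarrow> int) \<Rightarrow> (nat \<Rightarrow> int) \<Rightarrow> nat \<Rightarrow> nat" where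
  "js a b n = card (JS a b n)"

definition state11 :: "nat \<Rightarrow> int" where
  "state11 = (\<lambda>k. if k = 1 \<or> k = 2 then 1 else 0)"

end

theory Submission
  imports Defs
begin


definition Y :: "nat \<Rightarrow> (nat \<Rightarrow> nat \<Rightarrow> nat) set" where
 "Y r = {D. (\<forall>i j. D i j \<noteq> 0 \<longrightarrow> 1 \<le> i \<and> i \<le> r \<and> i < j \<and> j \<le> r+2) \<and>
    (\<forall>n\<in>{1..r}. (\<Sum>j\<in>{n<..r+2}. D n j) = (if n \<le> 2 then 1 else 0) + (\<Sum>i\<in>{1..<n}. D i n)) \<and>
    (\<exists>a\<in>{1..r}. \<forall>i. D i (r+1) = (if i = a then 1 else 0)) \<and>
    (\<exists>b\<in>{1..r}. \<forall>i. D i (r+2) = (if i = b then 1 else 0))}"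

definition st :: "(nat\<Rightarrow>nat\<Rightarrow>nat) \<Rightarrow> nat \<Rightarrow> nat \<Rightarrow> int" where
 "st D n k = (if k = 0 then 0 else (if n + k \<le> 2 then 1 else 0) + int (\<Sum>i\<in>{1..n}. D i (n+k)))"

definition toJS :: "nat \<Rightarrow> (nat\<Rightarrow>nat\<Rightarrow>nat) \<Rightarrow> (nat \<Rightarrow> int) list" where
  "toJS r D = map (st D) [0..<Suc r]"

definition toY :: "nat \<Rightarrow> (nat\<Rightarrow>int) list \<Rightarrow> nat\<Rightarrow>nat\<Rightarrow>nat" where
 "toY r ss = (\<lambda>i j. if 1 \<le> i \<and> i \<le> r \<and> i < j then nat ((ss!i) (j-i) - (ss!(i-1)) (j-i+1)) else 0)"

lemma LR:
  fixes c :: "nat \<Rightarrow> nat" and D :: "nat \<Rightarrow> nat \<Rightarrow> nat"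
  assumes c: "\<And>k. c k = (if k=0 then 0 else D n (n+k))" and z: "\<And>j. j > r+2 \<Longrightarrow> D n j = 0"
  shows "(\<Sum>k\<in>{k. c k \<noteq> 0}. c k) = (\<Sum>j\<in>{n<..r+2}. D n j)"
proof -
  have sub: "{k. c k \<noteq> 0} \<subseteq> {1..r+2}"
  proof
    fix k assume "k \<in> {k. c k \<noteq> 0}"
    then have "k \<noteq> 0" "D n (n+k) \<noteq> 0" using c by (auto split: if_splits)
    then show "k \<in> {1..r+2}" using z[of "n+k"] by (cases "n + k > r + 2") auto
  qed
  have "(\<Sum>k\<in>{k. c k \<noteq> 0}. c k) = (\<Sum>k\<in>{1..r+2}. c k)"
    by (rule sum.mono_neutral_left) (use sub in auto)
  also have "\<dots> = (\<Sum>k\<in>{1..r+2}. D n (k+n))" by (rule sum.cong) (auto simp: c add.commute)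
  also have "\<dots> = (\<Sum>j\<in>{1+n..r+2+n}. D n j)" by (rule sum.shift_bounds_cl_nat_ivl[symmetric])
  also have "\<dots> = (\<Sum>j\<in>{n<..r+2}. D n j)"
    by (rule sum.mono_neutral_right) (auto intro: z)
  finally show ?thesis .
qed

lemma sum_one:
  fixes f :: "nat \<Rightarrow> nat"
  assumes "finite S" "(\<Sum>i\<in>S. f i) = 1" "\<And>i. i \<notin> S \<Longrightarrow> f i = 0"
  shows "\<exists>a\<in>S. \<forall>i. f i = (if i = a then 1 else 0)"
proof -
  obtain a where a: "a \<in> S" "f a \<noteq> 0" using assms(2) by (metis sum.neutral zero_neq_one)
  have rem: "(\<Sum>i\<in>S. f i) = f a + (\<Sum>i\<in>S-{a}. f i)" using a assms(1) by (simp add: sum.remove)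
  then have fa: "f a = 1" using a assms(2) by linarith
  then have "(\<Sum>i\<in>S-{a}. f i) = 0" using rem assms(2) by simp
  then have "\<forall>i\<in>S-{a}. f i = 0" using assms(1) by simp
  then show ?thesis using a fa assms(3) by (intro bexI[of _ a]) auto
qed

lemma st_step: "1 \<le> n \<Longrightarrow> 1 \<le> k \<Longrightarrow> st D n k = st D (n-1) (k+1) + int (D n (n+k))"
  by (cases n) (auto simp: st_def)

lemma st0: "st D 0 = state11"
  by (auto simp: st_def state11_def fun_eq_iff)

lemma stY:
  assumes "D \<in> Y r" "r \<ge> 2"
  shows "st D r = state11"
proof
  fix k :: nat
  from assms obtain a b where ab: "a \<in> {1..r}" "b \<in> {1..r}" "\<forall>i. D i (r+1) = (if i = a then 1 else 0)"
    "\<forall>i. D i (r+2) = (if i = b then 1 else 0)" and sup: "\<forall>i j. D i j \<noteq> 0 \<longrightarrow> 1 \<le> i \<and> i \<le> r \<and> i < j \<and> j \<le> r+2"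
    unfolding Y_def by blast
  consider "k = 0" | "k = 1" | "k = 2" | "k \<ge> 3" by linarith
  then show "st D r k = state11 k"
  proof cases
    case 1 then show ?thesis by (simp add: st_def state11_def)
  next
    case 2 then show ?thesis using ab assms(2) by (simp add: st_def state11_def)
  next
    case 3 then show ?thesis using ab assms(2) by (simp add: st_def state11_def)
  next
    case 4
    then have "\<forall>i. D i (r+k) = 0" using sup by force
    then show ?thesis using 4 by (simp add: st_def state11_def)
  qed
qed

lemma length_toJS[simp]: "length (toJS r D) = Suc r" by (simp add: toJS_def)

lemma toJS_nth: "i \<le> r \<Longrightarrow> toJS r D ! i = st D i"
  unfolding toJS_def by (simp del: upt_Suc)

lemma toJS_in:
  assumes "D \<in> Y r" "r \<ge> 2"
  shows "toJS r D \<in> JS state11 state11 r"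
proof -
  have sup: "\<forall>i j. D i j \<noteq> 0 \<longrightarrow> 1 \<le> i \<and> i \<le> r \<and> i < j \<and> j \<le> r+2"
    and cons: "\<forall>n\<in>{1..r}. (\<Sum>j\<in>{n<..r+2}. D n j) = (if n \<le> 2 then 1 else 0) + (\<Sum>i\<in>{1..<n}. D i n)"
    using assms(1) unfolding Y_def by blast+
  have js: "juggling_state (st D n)" for n
  proof -
    have "{k. st D n k \<noteq> 0} \<subseteq> {..r+2}"
    proof
      fix k assume k: "k \<in> {k. st D n k \<noteq> 0}"
      show "k \<in> {..r+2}"
      proof (rule ccontr)
        assume "k \<notin> {..r+2}"
        then have "\<forall>i. D i (n+k) = 0" using sup by force
        then have "st D n k = 0" using \<open>k \<notin> {..r+2}\<close> by (simp add: st_def)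
        then show False using k by simp
      qed
    qed
    then have "finite {k. st D n k \<noteq> 0}" by (rule finite_subset) simp
    then show ?thesis unfolding juggling_state_def by (simp add: st_def)
  qed
  have step: "juggling_step (st D (i-1)) (st D i)" if i: "1 \<le> i" "i \<le> r" for i
  proof -
    define c where "c = (\<lambda>k. if k=0 then 0 else D i (i+k))"
    have z: "\<And>j. j > r+2 \<Longrightarrow> D i j = 0" using sup by force
    have S: "(\<Sum>k\<in>{k. c k \<noteq> 0}. c k) = (\<Sum>j\<in>{i<..r+2}. D i j)"
      by (rule LR) (auto simp: c_def z)
    have fin: "finite {k. c k \<noteq> 0}"
    proof (rule finite_subset)
      have "c k \<noteq> 0 \<Longrightarrow> k \<le> r+2" for k using z[of "i+k"]
        by (cases "i+k > r+2") (auto simp: c_def split: if_splits)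
      then show "{k. c k \<noteq> 0} \<subseteq> {..r+2}" by auto
    qed simp
    have "st D (i-1) 1 = (if i \<le> 2 then 1 else 0) + int (\<Sum>i'\<in>{1..<i}. D i' i)"
      using i by (simp add: st_def atLeastLessThanSuc_atLeastAtMost[symmetric])
    also have "\<dots> = int (\<Sum>k\<in>{k. c k \<noteq> 0}. c k)" using cons i S by simp
    finally have e: "int (\<Sum>k\<in>{k. c k \<noteq> 0}. c k) = st D (i-1) 1" by simp
    show ?thesis unfolding juggling_step_def
      by (rule exI[of _ c]) (use fin e i in \<open>auto simp: c_def st_step\<close>)
  qed
  show ?thesis unfolding JS_def
    using js step st0 stY[OF assms] by (auto simp: toJS_nth)
qed

lemma toY_toJS:
  assumes "D \<in> Y r"
  shows "toY r (toJS r D) = D"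
proof (intro ext)
  fix i j
  have sup: "\<forall>i j. D i j \<noteq> 0 \<longrightarrow> 1 \<le> i \<and> i \<le> r \<and> i < j \<and> j \<le> r+2"
    using assms(1) unfolding Y_def by blast
  show "toY r (toJS r D) i j = D i j"
  proof (cases "1 \<le> i \<and> i \<le> r \<and> i < j")
    case True
    then have e: "st D i (j-i) = st D (i-1) (j-i+1) + int (D i (i+(j-i)))"
      by (intro st_step) auto
    have "toY r (toJS r D) i j = nat (st D i (j-i) - st D (i-1) (j-i+1))"
    proof -
      have "toJS r D ! (i-1) = st D (i-1)" "toJS r D ! i = st D i" using True by (auto intro: toJS_nth)
      then show ?thesis using True unfolding toY_def by simp
    qed
    also have "\<dots> = D i j" using e True by simp
    finally show ?thesis .
  next
    case False
    then have "D i j = 0" using sup by blast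
    then show ?thesis unfolding toY_def by (simp only: if_not_P[OF False])
  qed
qed

context
  fixes r :: nat and ss :: "(nat \<Rightarrow> int) list"
  assumes ss: "ss \<in> JS state11 state11 r" and r2: "r \<ge> 2"
begin

lemma J0: "length ss = Suc r" "ss ! 0 = state11" "ss ! r = state11"
  "\<And>i. i \<le> r \<Longrightarrow> juggling_state (ss ! i)"
  "\<And>i. 1 \<le> i \<Longrightarrow> i \<le> r \<Longrightarrow> juggling_step (ss ! (i-1)) (ss ! i)"
  using ss unfolding JS_def by auto

lemma J1c:
  assumes "1 \<le> i" "i \<le> r"
  obtains c where "c 0 = 0" "finite {k. c k \<noteq> 0}" "int (\<Sum>k\<in>{k. c k \<noteq> 0}. c k) = (ss!(i-1)) 1"
    "\<And>k. c k = (if k = 0 then 0 else toY r ss i (i+k))"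
    "\<And>k. k \<ge> 1 \<Longrightarrow> (ss!i) k = (ss!(i-1)) (k+1) + int (toY r ss i (i+k))"
proof -
  obtain c where c: "finite {k. c k \<noteq> 0}" "c 0 = 0" "int (\<Sum>k\<in>{k. c k \<noteq> 0}. c k) = (ss!(i-1)) 1"
    "\<forall>k\<ge>1. (ss!i) k = (ss!(i-1)) (k + 1) + int (c k)"
    using J0(5)[OF assms] unfolding juggling_step_def by blast
  have e: "toY r ss i (i+k) = c k" if "k \<ge> 1" for k
    using c(4) that assms by (simp add: toY_def)
  have cc: "c k = (if k = 0 then 0 else toY r ss i (i+k))" for k
    using e c(2) by (cases "k = 0") auto
  have st: "(ss!i) k = (ss!(i-1)) (k+1) + int (toY r ss i (i+k))" if "k \<ge> 1" for k
    using c(4) that e[OF that] by simp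
  show ?thesis by (rule that[of c, OF c(2) c(1) c(3) cc st])
qed

lemma J2: "n \<le> r \<Longrightarrow> k \<ge> 1 \<Longrightarrow> (ss!n) k = state11 (n+k) + int (\<Sum>i\<in>{1..n}. toY r ss i (n+k))"
proof (induction n arbitrary: k)
  case 0 then show ?case using J0(2) by simp
next
  case (Suc n)
  have n1: "1 \<le> Suc n" "Suc n \<le> r" using Suc.prems by auto
  obtain c where "c 0 = 0" "finite {k. c k \<noteq> 0}" "int (\<Sum>k\<in>{k. c k \<noteq> 0}. c k) = (ss!(Suc n-1)) 1"
    "\<And>k. c k = (if k = 0 then 0 else toY r ss (Suc n) (Suc n+k))"
    "\<And>k. k \<ge> 1 \<Longrightarrow> (ss!(Suc n)) k = (ss!(Suc n-1)) (k+1) + int (toY r ss (Suc n) (Suc n+k))"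
    by (rule J1c[OF n1]) blast
  then have "(ss!(Suc n)) k = (ss!n) (k+1) + int (toY r ss (Suc n) (Suc n+k))" using Suc.prems by simp
  also have "\<dots> = state11 (n+(k+1)) + int (\<Sum>i\<in>{1..n}. toY r ss i (n+(k+1))) + int (toY r ss (Suc n) (Suc n+k))"
    using Suc by simp
  finally show ?case by simp
qed

lemma toY_sup: "toY r ss i j \<noteq> 0 \<Longrightarrow> 1 \<le> i \<and> i \<le> r \<and> i < j \<and> j \<le> r+2"
proof -
  assume nz: "toY r ss i j \<noteq> 0"
  then have i: "1 \<le> i \<and> i \<le> r \<and> i < j" by (auto simp: toY_def split: if_splits)
  show ?thesis
  proof (rule ccontr)
    assume "\<not> ?thesis"
    then have j: "j \<ge> r+3" using i by simp
    have "(ss!r) (j-r) = state11 (r+(j-r)) + int (\<Sum>i\<in>{1..r}. toY r ss i (r+(j-r)))"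
      using j by (intro J2) auto
    moreover have "j - r \<noteq> 1" "j - r \<noteq> 2" "j \<noteq> 1" "j \<noteq> 2" using j by auto
    ultimately have "(\<Sum>i\<in>{1..r}. int (toY r ss i j)) = 0" using j J0(3) by (simp add: state11_def)
    then have "(\<Sum>i\<in>{1..r}. toY r ss i j) = 0" by (metis of_nat_eq_0_iff of_nat_sum)
    then show False using i nz by simp
  qed
qed

lemma toY_in: "toY r ss \<in> Y r"
proof -
  have cons: "(\<Sum>j\<in>{n<..r+2}. toY r ss n j) = (if n \<le> 2 then 1 else 0) + (\<Sum>i\<in>{1..<n}. toY r ss i n)"
    if n: "n \<in> {1..r}" for n
  proof -
    have n1: "1 \<le> n" "n \<le> r" using n by auto
    obtain c where c: "c 0 = 0" "finite {k. c k \<noteq> 0}" "int (\<Sum>k\<in>{k. c k \<noteq> 0}. c k) = (ss!(n-1)) 1"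
    "\<And>k. c k = (if k = 0 then 0 else toY r ss n (n+k))"
    "\<And>k. k \<ge> 1 \<Longrightarrow> (ss!n) k = (ss!(n-1)) (k+1) + int (toY r ss n (n+k))"
    by (rule J1c[OF n1]) blast
    have S: "(\<Sum>k\<in>{k. c k \<noteq> 0}. c k) = (\<Sum>j\<in>{n<..r+2}. toY r ss n j)"
      by (rule LR[where D="toY r ss", OF c(4)]) (use toY_sup in force)
    have "(ss!(n-1)) 1 = state11 (n-1+1) + int (\<Sum>i\<in>{1..n-1}. toY r ss i (n-1+1))"
      using n by (intro J2) auto
    also have "\<dots> = (if n \<le> 2 then 1 else 0) + int (\<Sum>i\<in>{1..<n}. toY r ss i n)"
      using n by (simp add: state11_def atLeastLessThanSuc_atLeastAtMost[symmetric] del: of_nat_sum)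
    finally have "int (\<Sum>j\<in>{n<..r+2}. toY r ss n j) = (if n \<le> 2 then 1 else 0) + int (\<Sum>i\<in>{1..<n}. toY r ss i n)"
      using c(3) S by metis
    then show ?thesis by (cases "n \<le> 2") (simp_all del: of_nat_sum)
  qed
  have sink: "\<exists>a\<in>{1..r}. \<forall>i. toY r ss i (r+k) = (if i = a then 1 else 0)" if k: "k = 1 \<or> k = 2" for k
  proof (rule sum_one)
    have "(ss!r) k = state11 (r+k) + int (\<Sum>i\<in>{1..r}. toY r ss i (r+k))"
      using k by (intro J2) auto
    then show "(\<Sum>i\<in>{1..r}. toY r ss i (r+k)) = 1" using J0(3) k r2 by (auto simp: state11_def simp del: of_nat_sum)
  qed (auto simp: toY_def)
  have s1: "\<exists>a\<in>{1..r}. \<forall>i. toY r ss i (r+1) = (if i = a then 1 else 0)" by (rule sink) simp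
  have s2: "\<exists>a\<in>{1..r}. \<forall>i. toY r ss i (r+2) = (if i = a then 1 else 0)" by (rule sink) simp
  have s0: "\<forall>i j. toY r ss i j \<noteq> 0 \<longrightarrow> 1 \<le> i \<and> i \<le> r \<and> i < j \<and> j \<le> r+2"
    using toY_sup by blast
  show ?thesis unfolding Y_def mem_Collect_eq by (intro conjI s0 s1 s2 ballI cons)
qed

lemma toJS_toY: "toJS r (toY r ss) = ss"
proof (rule nth_equalityI)
  show "length (toJS r (toY r ss)) = length ss" using J0(1) by (simp add: toJS_def)
  fix n assume "n < length (toJS r (toY r ss))"
  then have n: "n \<le> r" by (simp add: toJS_def)
  show "toJS r (toY r ss) ! n = ss ! n"
  proof
    fix k
    show "(toJS r (toY r ss) ! n) k = (ss ! n) k"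
    proof (cases "k = 0")
      case True then show ?thesis using J0(4)[OF n] n by (simp add: toJS_nth st_def juggling_state_def)
    next
      case False
      then show ?thesis using J2[OF n, of k] n by (simp add: toJS_nth st_def state11_def)
    qed
  qed
qed

end



definition root :: "nat \<Rightarrow> nat \<Rightarrow> nat \<Rightarrow> int" where
  "root i j = (\<lambda>k. eps i k - eps j k)"

definition Pr :: "nat \<Rightarrow> (nat \<times> nat) set" where
  "Pr r = Sigma {1..r} (\<lambda>i. {i<..r})"

lemma finite_Pr[simp]: "finite (Pr r)" unfolding Pr_def by auto

lemma root_inj: "root i j = root i' j' \<Longrightarrow> i < j \<Longrightarrow> i' < j' \<Longrightarrow> i = i' \<and> j = j'"
proof -
  assume e: "root i j = root i' j'" and lt: "i < j" "i' < j'"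
  have "eps i i - eps j i = eps i' i - eps j' i" "eps i j - eps j j = eps i' j - eps j' j"
    using fun_cong[OF e, of i] fun_cong[OF e, of j] by (simp_all add: root_def)
  then show ?thesis using lt unfolding eps_def by (auto split: if_splits)
qed

lemma Pr_lt: "p \<in> Pr r \<Longrightarrow> 1 \<le> fst p \<and> fst p < snd p \<and> snd p \<le> r"
  unfolding Pr_def by (cases p) auto

lemma inj_root: "inj_on (\<lambda>p. root (fst p) (snd p)) (Pr r)"
proof (rule inj_onI)
  fix p q assume pq: "p \<in> Pr r" "q \<in> Pr r" "root (fst p) (snd p) = root (fst q) (snd q)"
  have "fst p = fst q \<and> snd p = snd q" by (rule root_inj[OF pq(3)]) (use Pr_lt[OF pq(1)] Pr_lt[OF pq(2)] in auto)
  then show "p = q" by (simp add: prod_eq_iff)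
qed

lemma L1:
  assumes "finite S" "inj_on f S" "set_mset N \<subseteq> f ` S"
  shows "N = (\<Sum>x\<in>S. replicate_mset (count N (f x)) (f x))"
proof (rule multiset_eqI)
  fix y
  have "count (\<Sum>x\<in>S. replicate_mset (count N (f x)) (f x)) y
      = (\<Sum>x\<in>S. if f x = y then count N y else 0)"
    unfolding count_sum by (rule sum.cong) auto
  also have "\<dots> = count N y"
  proof (cases "y \<in> f ` S")
    case True
    then obtain x where x: "x \<in> S" "y = f x" by auto
    have "(\<Sum>x\<in>S. if f x = y then count N y else 0) = (\<Sum>x'\<in>S. if x' = x then count N y else 0)"
      using assms(2) x by (intro sum.cong) (auto simp: inj_on_def)
    also have "\<dots> = count N y" using x assms(1) by simp
    finally show ?thesis .
  next
    case False
    then have c0: "count N y = 0" using assms(3) by (meson count_inI subsetD)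
    have "(\<Sum>x\<in>S. if f x = y then count N y else 0) = 0" by (rule sum.neutral) (simp add: c0)
    then show ?thesis using c0 by simp
  qed
  finally show "count N y = count (\<Sum>x\<in>S. replicate_mset (count N (f x)) (f x)) y" by simp
qed

lemma L2:
  assumes "finite S"
  shows "(\<Sum>v\<in>#(\<Sum>x\<in>S. replicate_mset (g x) (f x)). (v k::int)) = (\<Sum>x\<in>S. int (g x) * f x k)"
  using assms by (induction S rule: finite_induct) auto

lemma FL:
  fixes D :: "nat \<Rightarrow> nat \<Rightarrow> nat"
  shows "(\<Sum>p\<in>Pr r. int (D (fst p) (snd p)) * root (fst p) (snd p) n) =
     (if n \<in> {1..r} then int (\<Sum>j\<in>{n<..r}. D n j) - int (\<Sum>i\<in>{1..<n}. D i n) else 0)"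
proof -
  have "(\<Sum>p\<in>Pr r. int (D (fst p) (snd p)) * root (fst p) (snd p) n)
     = (\<Sum>i\<in>{1..r}. \<Sum>j\<in>{i<..r}. int (D i j) * root i j n)"
    unfolding Pr_def by (subst sum.Sigma) (auto simp: case_prod_beta)
  also have "\<dots> = (\<Sum>i\<in>{1..r}. \<Sum>j\<in>{i<..r}. (if i = n then int (D i j) else 0))
     - (\<Sum>i\<in>{1..r}. \<Sum>j\<in>{i<..r}. (if j = n then int (D i j) else 0))"
    unfolding sum_subtractf[symmetric] by (intro sum.cong refl) (auto simp: root_def eps_def)
  also have "(\<Sum>i\<in>{1..r}. \<Sum>j\<in>{i<..r}. (if i = n then int (D i j) else 0))
     = (\<Sum>i\<in>{1..r}. if i = n then (\<Sum>j\<in>{i<..r}. int (D i j)) else 0)"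
    by (intro sum.cong refl) auto
  also have "\<dots> = (if n \<in> {1..r} then int (\<Sum>j\<in>{n<..r}. D n j) else 0)"
    by simp
  also have "(\<Sum>i\<in>{1..r}. \<Sum>j\<in>{i<..r}. (if j = n then int (D i j) else 0))
     = (\<Sum>i\<in>{1..r}. if i < n \<and> n \<le> r then int (D i n) else 0)"
    by (intro sum.cong refl) auto
  also have "\<dots> = (if n \<in> {1..r} then int (\<Sum>i\<in>{1..<n}. D i n) else 0)"
  proof (cases "n \<in> {1..r}")
    case True
    have "(\<Sum>i\<in>{1..r}. if i < n \<and> n \<le> r then int (D i n) else 0) = (\<Sum>i\<in>{i\<in>{1..r}. i < n}. int (D i n))"
      using True by (subst sum.inter_filter) auto
    also have "{i\<in>{1..r}. i < n} = {1..<n}" using True by auto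
    finally show ?thesis using True by simp
  next
    case False
    have "(\<Sum>i\<in>{1..r}. if i < n \<and> n \<le> r then int (D i n) else 0) = 0"
      by (rule sum.neutral) (use False in auto)
    then show ?thesis using False by auto
  qed
  finally show ?thesis by simp
qed

definition SS :: "nat \<Rightarrow> nat \<Rightarrow> (nat \<Rightarrow> int) multiset" where
  "SS a b = (if a \<le> b then {#eps a, eps b#} else {#(\<lambda>k. eps b k + eps a k)#})"

definition isminus :: "nat \<Rightarrow> (nat \<Rightarrow> int) \<Rightarrow> bool" where
  "isminus r v \<longleftrightarrow> v \<in> (\<lambda>p. root (fst p) (snd p)) ` Pr r"

lemma SS_sum: "(\<Sum>v\<in>#SS a b. v k) = eps a k + eps b k"
  unfolding SS_def by (cases "a \<le> b") (simp_all add: add.commute)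

lemma eps_nonneg: "eps i k \<ge> 0" by (simp add: eps_def)

lemma SS_nonminus: "v \<in># SS a b \<Longrightarrow> \<not> isminus r v"
proof
  assume v: "v \<in># SS a b" and m: "isminus r v"
  from m obtain i j where "v = root i j" "i < j" unfolding isminus_def Pr_def by auto
  then have "v j = -1" by (simp add: root_def eps_def)
  moreover have "v j \<ge> 0" using v eps_nonneg[of a j] eps_nonneg[of b j]
    by (auto simp: SS_def split: if_splits)
  ultimately show False by simp
qed

lemma eps_inj: "eps a = eps b \<Longrightarrow> a = b"
  unfolding eps_def by (metis one_neq_zero)

lemma SS_inj:
  assumes "SS a b = SS a' b'"
  shows "a = a' \<and> b = b'"
proof (cases "a \<le> b")
  case True
  show ?thesis
  proof (cases "a' \<le> b'")
    case True': True
    then have "{#eps a, eps b#} = {#eps a', eps b'#}" using assms True by (simp add: SS_def)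
    then have "(eps a = eps a' \<and> eps b = eps b') \<or> (eps a = eps b' \<and> eps b = eps a')"
      by (auto simp: add_eq_conv_diff)
    then show ?thesis using True True' eps_inj by (metis le_antisym)
  next
    case False
    then show ?thesis using assms True by (simp add: SS_def)
  qed
next
  case False
  show ?thesis
  proof (cases "a' \<le> b'")
    case True
    then show ?thesis using assms False by (simp add: SS_def)
  next
    case False': False
    then have e: "(\<lambda>k. eps b k + eps a k) = (\<lambda>k. eps b' k + eps a' k)" using assms False by (simp add: SS_def)
    have "\<forall>k. eps b k + eps a k = eps b' k + eps a' k" using e by metis
    then have "eps b b + eps a b = eps b' b + eps a' b" "eps b a + eps a a = eps b' a + eps a' a"
      "eps b b' + eps a b' = eps b' b' + eps a' b'" "eps b a' + eps a a' = eps b' a' + eps a' a'" by auto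
    then show ?thesis using False False' unfolding eps_def by (auto split: if_splits)
  qed
qed

definition sa :: "nat \<Rightarrow> (nat \<Rightarrow> nat \<Rightarrow> nat) \<Rightarrow> nat" where
  "sa r D = (THE a. \<forall>i. D i (r+1) = (if i = a then 1 else 0))"
definition sb :: "nat \<Rightarrow> (nat \<Rightarrow> nat \<Rightarrow> nat) \<Rightarrow> nat" where
  "sb r D = (THE a. \<forall>i. D i (r+2) = (if i = a then 1 else 0))"

lemma the_unit:
  assumes "\<forall>i. f i = (if i = a then (1::nat) else 0)"
  shows "(THE a. \<forall>i. f i = (if i = a then 1 else 0)) = a"
proof (rule the_equality)
  fix a' assume "\<forall>i. f i = (if i = a' then 1 else 0)"
  then have "f a' = 1" by simp
  then show "a' = a" using assms by (metis zero_neq_one)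
qed (rule assms)

lemma sa_eq: "\<forall>i. D i (r+1) = (if i = a then 1 else 0) \<Longrightarrow> sa r D = a"
  unfolding sa_def using the_unit[of "\<lambda>i. D i (r+1)" a] by simp
lemma sb_eq: "\<forall>i. D i (r+2) = (if i = a then 1 else 0) \<Longrightarrow> sb r D = a"
  unfolding sb_def using the_unit[of "\<lambda>i. D i (r+2)" a] by simp

definition toP :: "nat \<Rightarrow> (nat \<Rightarrow> nat \<Rightarrow> nat) \<Rightarrow> (nat \<Rightarrow> int) multiset" where
  "toP r D = (\<Sum>p\<in>Pr r. replicate_mset (D (fst p) (snd p)) (root (fst p) (snd p))) + SS (sa r D) (sb r D)"

definition mab :: "nat \<Rightarrow> (nat \<Rightarrow> int) multiset \<Rightarrow> nat \<times> nat" where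
  "mab r M = (THE ab. fst ab \<in> {1..r} \<and> snd ab \<in> {1..r} \<and> filter_mset (\<lambda>v. \<not> isminus r v) M = SS (fst ab) (snd ab))"

definition toYP :: "nat \<Rightarrow> (nat \<Rightarrow> int) multiset \<Rightarrow> nat \<Rightarrow> nat \<Rightarrow> nat" where
  "toYP r M = (\<lambda>i j. if 1 \<le> i \<and> i < j \<and> j \<le> r then count M (root i j)
     else if 1 \<le> i \<and> i \<le> r \<and> j = r+1 then (if i = fst (mab r M) then 1 else 0)
     else if 1 \<le> i \<and> i \<le> r \<and> j = r+2 then (if i = snd (mab r M) then 1 else 0) else 0)"

lemma mab_eq:
  assumes "a \<in> {1..r}" "b \<in> {1..r}" "filter_mset (\<lambda>v. \<not> isminus r v) M = SS a b"
  shows "mab r M = (a, b)"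
  unfolding mab_def
proof (rule the_equality)
  fix ab :: "nat \<times> nat"
  assume "fst ab \<in> {1..r} \<and> snd ab \<in> {1..r} \<and> filter_mset (\<lambda>v. \<not> isminus r v) M = SS (fst ab) (snd ab)"
  then have "SS a b = SS (fst ab) (snd ab)" using assms by simp
  then show "ab = (a, b)" using SS_inj by (metis prod.collapse)
qed (use assms in simp)

lemma cons_equiv:
  fixes D :: "nat \<Rightarrow> nat \<Rightarrow> nat"
  assumes k: "k \<in> {1..r}" and r2: "r \<ge> 2"
    and da: "\<forall>i. D i (r+1) = (if i = a then 1 else 0)"
    and db: "\<forall>i. D i (r+2) = (if i = b then 1 else 0)"
  shows "((\<Sum>j\<in>{k<..r+2}. D k j) = (if k \<le> 2 then 1 else 0) + (\<Sum>i\<in>{1..<k}. D i k)) \<longleftrightarrow>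
         ((\<Sum>p\<in>Pr r. int (D (fst p) (snd p)) * root (fst p) (snd p) k) + eps a k + eps b k = highest_root_B k)"
proof -
  have set: "{k<..r+2} = insert (r+2) (insert (r+1) {k<..r})" using k by auto
  have "(\<Sum>j\<in>{k<..r+2}. D k j) = D k (r+2) + (D k (r+1) + (\<Sum>j\<in>{k<..r}. D k j))"
    unfolding set by simp
  also have "\<dots> = (if k = b then 1 else 0) + (if k = a then 1 else 0) + (\<Sum>j\<in>{k<..r}. D k j)"
    using da db by simp
  finally have e1: "(\<Sum>j\<in>{k<..r+2}. D k j) = (if k = b then 1 else 0) + (if k = a then 1 else 0) + (\<Sum>j\<in>{k<..r}. D k j)" .
  have e2: "highest_root_B k = (if k \<le> 2 then 1 else 0)" using k by (auto simp: highest_root_B_def eps_def)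
  define pa :: nat where "pa = (if k = a then 1 else 0)"
  define pb :: nat where "pb = (if k = b then 1 else 0)"
  define c :: nat where "c = (if k \<le> 2 then 1 else 0)"
  define X where "X = (\<Sum>j\<in>{k<..r}. D k j)"
  define Y where "Y = (\<Sum>i\<in>{1..<k}. D i k)"
  have e1': "(\<Sum>j\<in>{k<..r+2}. D k j) = pb + pa + X" using e1 unfolding pa_def pb_def X_def .
  have rhs: "(if k \<le> 2 then 1 else 0) + (\<Sum>i\<in>{1..<k}. D i k) = c + Y" unfolding c_def Y_def ..
  have e2': "highest_root_B k = int c" using e2 unfolding c_def by simp
  have ea: "eps a k = int pa" "eps b k = int pb" unfolding pa_def pb_def eps_def by auto
  have e3: "(\<Sum>p\<in>Pr r. int (D (fst p) (snd p)) * root (fst p) (snd p) k) = int X - int Y"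
    unfolding FL X_def Y_def using k by simp
  have aux: "(pb + pa + X = c + Y) \<longleftrightarrow> (int X - int Y + int pa + int pb = int c)" by linarith
  show ?thesis using aux by (simp only: e1' rhs e2' e3 ea)
qed



lemma sum_swap_mset:
  "(\<Sum>v\<in>#M. \<Sum>k\<in>K. f v k) = (\<Sum>k\<in>K. \<Sum>v\<in>#M. (f v k :: int))"
  by (induction M) (simp_all add: sum.distrib)

lemma sum_ge_size:
  "(\<forall>v\<in>#A. f v \<ge> (1::int)) \<Longrightarrow> (\<Sum>v\<in>#A. f v) \<ge> int (size A)"
  by (induction A) auto

lemma mem_sum_rep:
  assumes "v \<in># (\<Sum>p\<in>Pr r. replicate_mset (g p) (root (fst p) (snd p)))"
  shows "\<exists>p\<in>Pr r. v = root (fst p) (snd p)"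
proof -
  have "v \<in> (\<Union>p\<in>Pr r. set_mset (replicate_mset (g p) (root (fst p) (snd p))))"
    using assms by (simp only: set_mset_sum[OF finite_Pr])
  then show ?thesis by (auto split: if_splits)
qed

lemma root_isminus: "p \<in> Pr r \<Longrightarrow> isminus r (root (fst p) (snd p))"
  unfolding isminus_def by auto

lemma toP_split: "toP r D = (\<Sum>p\<in>Pr r. replicate_mset (D (fst p) (snd p)) (root (fst p) (snd p))) + SS (sa r D) (sb r D)"
  by (simp add: toP_def)

lemma coord_sum:
  "(\<Sum>v\<in>#(\<Sum>p\<in>Pr r. replicate_mset (g p) (root (fst p) (snd p))) + SS a b. v k)
   = (\<Sum>p\<in>Pr r. int (g p) * root (fst p) (snd p) k) + eps a k + eps b k"
  using L2[where S="Pr r" and g=g and f="\<lambda>p. root (fst p) (snd p)" and k=k] SS_sum[where a=a and b=b and k=k] by simp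

lemma Y_facts:
  assumes "D \<in> Y r"
  obtains a b where "a \<in> {1..r}" "b \<in> {1..r}" "\<forall>i. D i (r+1) = (if i = a then 1 else 0)"
    "\<forall>i. D i (r+2) = (if i = b then 1 else 0)"
    "\<forall>i j. D i j \<noteq> 0 \<longrightarrow> 1 \<le> i \<and> i \<le> r \<and> i < j \<and> j \<le> r+2"
    "\<forall>n\<in>{1..r}. (\<Sum>j\<in>{n<..r+2}. D n j) = (if n \<le> 2 then 1 else 0) + (\<Sum>i\<in>{1..<n}. D i n)"
  using assms unfolding Y_def by blast

lemma hr_out: "k \<notin> {1..r} \<Longrightarrow> r \<ge> 2 \<Longrightarrow> highest_root_B k = 0"
  by (auto simp: highest_root_B_def eps_def)

lemma toP_in:
  assumes D: "D \<in> Y r" and r2: "r \<ge> 2"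
  shows "toP r D \<in> root_partitions_B r highest_root_B"
proof -
  obtain a b where ab: "a \<in> {1..r}" "b \<in> {1..r}" "\<forall>i. D i (r+1) = (if i = a then 1 else 0)"
    "\<forall>i. D i (r+2) = (if i = b then 1 else 0)"
    and sup: "\<forall>i j. D i j \<noteq> 0 \<longrightarrow> 1 \<le> i \<and> i \<le> r \<and> i < j \<and> j \<le> r+2"
    and cons: "\<forall>n\<in>{1..r}. (\<Sum>j\<in>{n<..r+2}. D n j) = (if n \<le> 2 then 1 else 0) + (\<Sum>i\<in>{1..<n}. D i n)"
    by (rule Y_facts[OF D])
  have saD: "sa r D = a" by (rule sa_eq) (rule ab(3))
  have sbD: "sb r D = b" by (rule sb_eq) (rule ab(4))
  have set: "set_mset (toP r D) \<subseteq> posroots_B r"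
  proof
    fix v assume v: "v \<in># toP r D"
    then have "v \<in># (\<Sum>p\<in>Pr r. replicate_mset (D (fst p) (snd p)) (root (fst p) (snd p))) \<or> v \<in># SS a b"
      unfolding toP_split saD sbD by simp
    then show "v \<in> posroots_B r"
    proof
      assume "v \<in># (\<Sum>p\<in>Pr r. replicate_mset (D (fst p) (snd p)) (root (fst p) (snd p)))"
      then obtain p where p: "p \<in> Pr r" "v = root (fst p) (snd p)"
        using mem_sum_rep[where v=v and r=r and g="\<lambda>p. D (fst p) (snd p)"] by blast
      then show ?thesis using Pr_lt[OF p(1)] unfolding posroots_B_def root_def by blast
    next
      assume s: "v \<in># SS a b"
      show ?thesis
      proof (cases "a \<le> b")
        case True
        then have "v = eps a \<or> v = eps b" using s by (simp add: SS_def)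
        then show ?thesis using ab unfolding posroots_B_def by auto
      next
        case False
        then have "v = (\<lambda>k. eps b k + eps a k)" using s by (simp add: SS_def)
        then have "v \<in> {(\<lambda>k. eps i k + eps j k) | i j. 1 \<le> i \<and> i < j \<and> j \<le> r}"
          unfolding mem_Collect_eq by (intro exI[of _ b] exI[of _ a]) (use ab False in auto)
        then show ?thesis unfolding posroots_B_def by blast
      qed
    qed
  qed
  have coord: "(\<lambda>k. \<Sum>\<^sub># (image_mset (\<lambda>v. v k) (toP r D))) = highest_root_B"
  proof
    fix k
    have e: "(\<Sum>v\<in>#toP r D. v k) = (\<Sum>p\<in>Pr r. int (D (fst p) (snd p)) * root (fst p) (snd p) k) + eps a k + eps b k"
      unfolding toP_split saD sbD by (rule coord_sum)
    show "(\<Sum>v\<in>#toP r D. v k) = highest_root_B k"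
    proof (cases "k \<in> {1..r}")
      case True
      then show ?thesis unfolding e using cons_equiv[OF True r2 ab(3) ab(4)] cons True by blast
    next
      case False
      have "eps a k = 0" "eps b k = 0" using False ab by (auto simp: eps_def)
      then show ?thesis unfolding e FL using False hr_out[OF False r2] by auto
    qed
  qed
  show ?thesis unfolding root_partitions_B_def using set coord by blast
qed

lemma filt_toP: "filter_mset (\<lambda>v. \<not> isminus r v) (toP r D) = SS (sa r D) (sb r D)"
proof -
  have "filter_mset (\<lambda>v. \<not> isminus r v) (\<Sum>p\<in>Pr r. replicate_mset (D (fst p) (snd p)) (root (fst p) (snd p))) = {#}"
  proof -
    have "isminus r x" if "x \<in># (\<Sum>p\<in>Pr r. replicate_mset (D (fst p) (snd p)) (root (fst p) (snd p)))" for x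
      using mem_sum_rep[OF that] root_isminus by blast
    then show ?thesis by simp
  qed
  moreover have "filter_mset (\<lambda>v. \<not> isminus r v) (SS (sa r D) (sb r D)) = SS (sa r D) (sb r D)"
    unfolding filter_mset_eq_conv using SS_nonminus by auto
  ultimately show ?thesis unfolding toP_split by simp
qed

lemma count_toP:
  assumes p: "p \<in> Pr r"
  shows "count (toP r D) (root (fst p) (snd p)) = D (fst p) (snd p)"
proof -
  have "root (fst p) (snd p) \<notin># SS (sa r D) (sb r D)" using SS_nonminus root_isminus[OF p] by blast
  then have c0: "count (SS (sa r D) (sb r D)) (root (fst p) (snd p)) = 0" by (simp add: not_in_iff)
  have "count (\<Sum>q\<in>Pr r. replicate_mset (D (fst q) (snd q)) (root (fst q) (snd q))) (root (fst p) (snd p))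
     = (\<Sum>q\<in>Pr r. if q = p then D (fst q) (snd q) else 0)"
    unfolding count_sum
  proof (rule sum.cong)
    fix q assume q: "q \<in> Pr r"
    have "(root (fst p) (snd p) = root (fst q) (snd q)) = (q = p)"
      using inj_root[of r] p q unfolding inj_on_def by metis
    then show "count (replicate_mset (D (fst q) (snd q)) (root (fst q) (snd q))) (root (fst p) (snd p))
      = (if q = p then D (fst q) (snd q) else 0)" by (simp add: count_replicate_mset)
  qed simp
  also have "\<dots> = D (fst p) (snd p)" using p by simp
  finally show ?thesis unfolding toP_split using c0 by simp
qed

lemma toYP_toP:
  assumes D: "D \<in> Y r" and r2: "r \<ge> 2"
  shows "toYP r (toP r D) = D"
proof (intro ext)
  fix i j
  obtain a b where ab: "a \<in> {1..r}" "b \<in> {1..r}" "\<forall>i. D i (r+1) = (if i = a then 1 else 0)"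
    "\<forall>i. D i (r+2) = (if i = b then 1 else 0)"
    and sup: "\<forall>i j. D i j \<noteq> 0 \<longrightarrow> 1 \<le> i \<and> i \<le> r \<and> i < j \<and> j \<le> r+2"
    by (rule Y_facts[OF D])
  have saD: "sa r D = a" by (rule sa_eq) (rule ab(3))
  have sbD: "sb r D = b" by (rule sb_eq) (rule ab(4))
  have m: "mab r (toP r D) = (a, b)"
    by (rule mab_eq) (use ab filt_toP[of r D] saD sbD in auto)
  show "toYP r (toP r D) i j = D i j"
  proof (cases "1 \<le> i \<and> i < j \<and> j \<le> r")
    case True
    then have "(i, j) \<in> Pr r" by (auto simp: Pr_def)
    then show ?thesis using count_toP[of "(i,j)" r D] True by (simp add: toYP_def)
  next
    case False
    show ?thesis
    proof (cases "1 \<le> i \<and> i \<le> r \<and> j = r+1")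
      case True
      then show ?thesis using False ab(3) m by (auto simp: toYP_def)
    next
      case False': False
      show ?thesis
      proof (cases "1 \<le> i \<and> i \<le> r \<and> j = r+2")
        case True
        then show ?thesis using False False' ab(4) m by (auto simp: toYP_def)
      next
        case False'': False
        then have "D i j = 0" using sup False False' by force
        then show ?thesis unfolding toYP_def
          by (simp only: if_not_P[OF False] if_not_P[OF False'] if_not_P[OF False''])
      qed
    qed
  qed
qed



definition wt :: "nat \<Rightarrow> (nat \<Rightarrow> int) \<Rightarrow> int" where
  "wt r v = (\<Sum>k\<in>{1..r}. v k)"

lemma wt_eps: "1 \<le> i \<Longrightarrow> i \<le> r \<Longrightarrow> wt r (eps i) = 1"
  unfolding wt_def eps_def by simp

lemma wt_plus: "1 \<le> i \<Longrightarrow> i \<le> r \<Longrightarrow> 1 \<le> j \<Longrightarrow> j \<le> r \<Longrightarrow> wt r (\<lambda>k. eps i k + eps j k) = 2"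
proof -
  assume a: "1 \<le> i" "i \<le> r" "1 \<le> j" "j \<le> r"
  have "wt r (\<lambda>k. eps i k + eps j k) = wt r (eps i) + wt r (eps j)"
    unfolding wt_def by (simp add: sum.distrib)
  then show ?thesis using wt_eps a by simp
qed

lemma wt_root: "p \<in> Pr r \<Longrightarrow> wt r (root (fst p) (snd p)) = 0"
proof -
  assume p: "p \<in> Pr r"
  have "wt r (root (fst p) (snd p)) = wt r (eps (fst p)) - wt r (eps (snd p))"
    unfolding wt_def root_def by (simp add: sum_subtractf)
  then show ?thesis using Pr_lt[OF p] wt_eps by simp
qed

lemma nonminus_cases:
  assumes "v \<in> posroots_B r" "\<not> isminus r v"
  shows "(\<exists>i j. 1 \<le> i \<and> i < j \<and> j \<le> r \<and> v = (\<lambda>k. eps i k + eps j k)) \<or> (\<exists>i. 1 \<le> i \<and> i \<le> r \<and> v = eps i)"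
proof -
  from assms(1) consider (m) i j where "1 \<le> i" "i < j" "j \<le> r" "v = (\<lambda>k. eps i k - eps j k)"
    | (p) i j where "1 \<le> i" "i < j" "j \<le> r" "v = (\<lambda>k. eps i k + eps j k)"
    | (s) i where "1 \<le> i" "i \<le> r" "v = eps i"
    unfolding posroots_B_def by blast
  then show ?thesis
  proof cases
    case m
    then have "(i, j) \<in> Pr r" by (auto simp: Pr_def)
    moreover have "v = root (fst (i,j)) (snd (i,j))" using m by (simp add: root_def)
    ultimately have "isminus r v" unfolding isminus_def by blast
    then show ?thesis using assms(2) by blast
  next
    case p then show ?thesis by blast
  next
    case s then show ?thesis by blast
  qed
qed

lemma Q3:
  assumes M: "M \<in> root_partitions_B r highest_root_B" and r2: "r \<ge> 2"
  shows "\<exists>a b. a \<in> {1..r} \<and> b \<in> {1..r} \<and> filter_mset (\<lambda>v. \<not> isminus r v) M = SS a b"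
proof -
  have setM: "set_mset M \<subseteq> posroots_B r" and cM: "(\<lambda>k. \<Sum>\<^sub># (image_mset (\<lambda>v. v k) M)) = highest_root_B"
    using M unfolding root_partitions_B_def by auto
  have cMk: "(\<Sum>v\<in>#M. v k) = highest_root_B k" for k using fun_cong[OF cM, of k] by simp
  define N where "N = filter_mset (\<lambda>v. \<not> isminus r v) M"
  define N' where "N' = filter_mset (\<lambda>v. isminus r v) M"
  have MN: "M = N' + N" unfolding N_def N'_def by (rule multiset_partition)
  have total: "(\<Sum>v\<in>#M. wt r v) = 2"
  proof -
    have "(\<Sum>v\<in>#M. wt r v) = (\<Sum>k\<in>{1..r}. \<Sum>v\<in>#M. v k)" unfolding wt_def by (rule sum_swap_mset)
    also have "\<dots> = (\<Sum>k\<in>{1..r}. highest_root_B k)" using cMk by simp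
    also have "\<dots> = wt r (\<lambda>k. eps 1 k + eps 2 k)" unfolding wt_def highest_root_B_def ..
    also have "\<dots> = 2" using wt_plus[of 1 r 2] r2 by simp
    finally show ?thesis .
  qed
  have z: "(\<Sum>v\<in>#N'. wt r v) = 0"
  proof -
    have "wt r v = 0" if "v \<in># N'" for v
    proof -
      have "isminus r v" using that by (simp add: N'_def)
      then obtain p where "p \<in> Pr r" "v = root (fst p) (snd p)" unfolding isminus_def by blast
      then show ?thesis using wt_root by simp
    qed
    then have "image_mset (wt r) N' = image_mset (\<lambda>_. 0) N'" by (intro image_mset_cong) simp
    then show ?thesis by simp
  qed
  have sN: "(\<Sum>v\<in>#N. wt r v) = 2" using total z MN by (metis add_0 image_mset_union sum_mset.union)
  have clsN: "(\<exists>i j. 1 \<le> i \<and> i < j \<and> j \<le> r \<and> v = (\<lambda>k. eps i k + eps j k)) \<or> (\<exists>i. 1 \<le> i \<and> i \<le> r \<and> v = eps i)"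
    if "v \<in># N" for v
  proof (rule nonminus_cases)
    show "v \<in> posroots_B r" using that setM by (auto simp: N_def)
    show "\<not> isminus r v" using that by (simp add: N_def)
  qed
  have wt12: "wt r v \<ge> 1" if "v \<in># N" for v
    using clsN[OF that] wt_eps wt_plus by fastforce
  have "N \<noteq> {#}" using sN by auto
  then obtain v where v: "v \<in># N" by blast
  define N1 where "N1 = N - {#v#}"
  have N1: "N = add_mset v N1" using v by (simp add: N1_def)
  have s1: "wt r v + (\<Sum>u\<in>#N1. wt r u) = 2" using sN unfolding N1 by simp
  have ge1: "(\<Sum>u\<in>#N1. wt r u) \<ge> int (size N1)" by (rule sum_ge_size) (use wt12 N1 in auto)
  from clsN[OF v] show ?thesis
  proof
    assume "\<exists>i j. 1 \<le> i \<and> i < j \<and> j \<le> r \<and> v = (\<lambda>k. eps i k + eps j k)"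
    then obtain i j where ij: "1 \<le> i" "i < j" "j \<le> r" "v = (\<lambda>k. eps i k + eps j k)" by blast
    then have "wt r v = 2" using wt_plus by simp
    then have "size N1 = 0" using s1 ge1 by simp
    then have "N = {#v#}" using N1 by simp
    then have "N = SS j i" using ij by (simp add: SS_def)
    then show ?thesis using ij unfolding N_def by (intro exI[of _ j] exI[of _ i]) auto
  next
    assume "\<exists>i. 1 \<le> i \<and> i \<le> r \<and> v = eps i"
    then obtain i where i: "1 \<le> i" "i \<le> r" "v = eps i" by blast
    then have "wt r v = 1" using wt_eps by simp
    then have sN1: "(\<Sum>u\<in>#N1. wt r u) = 1" using s1 by simp
    then have "N1 \<noteq> {#}" by auto
    then obtain u where u: "u \<in># N1" by blast
    define N2 where "N2 = N1 - {#u#}"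
    have N2: "N1 = add_mset u N2" using u by (simp add: N2_def)
    have uN: "u \<in># N" using u N1 by simp
    have s2: "wt r u + (\<Sum>x\<in>#N2. wt r x) = 1" using sN1 unfolding N2 by simp
    have ge2: "(\<Sum>x\<in>#N2. wt r x) \<ge> int (size N2)" by (rule sum_ge_size) (use wt12 N1 N2 in auto)
    have "wt r u \<ge> 1" using wt12[OF uN] .
    then have "size N2 = 0" "wt r u = 1" using s2 ge2 by linarith+
    then have N2e: "N2 = {#}" by simp
    from clsN[OF uN] obtain j where j: "1 \<le> j" "j \<le> r" "u = eps j"
    proof
      assume "\<exists>i j. 1 \<le> i \<and> i < j \<and> j \<le> r \<and> u = (\<lambda>k. eps i k + eps j k)"
      then obtain i' j' where "1 \<le> i'" "i' < j'" "j' \<le> r" "u = (\<lambda>k. eps i' k + eps j' k)" by blast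
      then have "wt r u = 2" using wt_plus by simp
      then show ?thesis using \<open>wt r u = 1\<close> by simp
    qed blast
    have NN: "N = {#eps i, eps j#}" using N1 N2 N2e i j by simp
    show ?thesis
    proof (cases "i \<le> j")
      case True
      then have "N = SS i j" using NN by (simp add: SS_def)
      then show ?thesis using i j unfolding N_def by (intro exI[of _ i] exI[of _ j]) auto
    next
      case False
      then have "N = SS j i" using NN by (simp add: SS_def add_mset_commute)
      then show ?thesis using i j unfolding N_def by (intro exI[of _ j] exI[of _ i]) auto
    qed
  qed
qed



lemma mabM:
  assumes M: "M \<in> root_partitions_B r highest_root_B" and r2: "r \<ge> 2"
  shows "fst (mab r M) \<in> {1..r} \<and> snd (mab r M) \<in> {1..r} \<and>
     filter_mset (\<lambda>v. \<not> isminus r v) M = SS (fst (mab r M)) (snd (mab r M))"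
proof -
  obtain a b where ab: "a \<in> {1..r}" "b \<in> {1..r}" "filter_mset (\<lambda>v. \<not> isminus r v) M = SS a b"
    using Q3[OF M r2] by blast
  have "mab r M = (a, b)" by (rule mab_eq[OF ab])
  then show ?thesis using ab by simp
qed

lemma decompM:
  assumes M: "M \<in> root_partitions_B r highest_root_B" and r2: "r \<ge> 2"
  shows "M = (\<Sum>p\<in>Pr r. replicate_mset (count M (root (fst p) (snd p))) (root (fst p) (snd p)))
     + SS (fst (mab r M)) (snd (mab r M))"
proof -
  have MN: "M = filter_mset (\<lambda>v. isminus r v) M + filter_mset (\<lambda>v. \<not> isminus r v) M"
    by (rule multiset_partition)
  have "filter_mset (\<lambda>v. isminus r v) M = (\<Sum>p\<in>Pr r. replicate_mset (count (filter_mset (\<lambda>v. isminus r v) M) (root (fst p) (snd p))) (root (fst p) (snd p)))"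
    by (rule L1[OF finite_Pr inj_root]) (auto simp: isminus_def)
  also have "\<dots> = (\<Sum>p\<in>Pr r. replicate_mset (count M (root (fst p) (snd p))) (root (fst p) (snd p)))"
    by (intro sum.cong refl) (simp add: root_isminus)
  finally show ?thesis using MN mabM[OF M r2] by simp
qed

lemma toYP_sinks:
  assumes M: "M \<in> root_partitions_B r highest_root_B" and r2: "r \<ge> 2"
  shows "\<forall>i. toYP r M i (r+1) = (if i = fst (mab r M) then 1 else 0)"
    "\<forall>i. toYP r M i (r+2) = (if i = snd (mab r M) then 1 else 0)"
  using mabM[OF M r2] by (auto simp: toYP_def)

lemma toYP_Pr: "p \<in> Pr r \<Longrightarrow> toYP r M (fst p) (snd p) = count M (root (fst p) (snd p))"
  using Pr_lt[of p r] by (simp add: toYP_def)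

lemma toP_toYP:
  assumes M: "M \<in> root_partitions_B r highest_root_B" and r2: "r \<ge> 2"
  shows "toP r (toYP r M) = M"
proof -
  have sa: "sa r (toYP r M) = fst (mab r M)" by (rule sa_eq) (rule toYP_sinks(1)[OF M r2])
  have sb: "sb r (toYP r M) = snd (mab r M)" by (rule sb_eq) (rule toYP_sinks(2)[OF M r2])
  have "toP r (toYP r M) = (\<Sum>p\<in>Pr r. replicate_mset (count M (root (fst p) (snd p))) (root (fst p) (snd p)))
     + SS (fst (mab r M)) (snd (mab r M))"
    unfolding toP_split sa sb by (simp add: toYP_Pr cong: sum.cong)
  also have "\<dots> = M" using decompM[OF M r2] by simp
  finally show ?thesis .
qed

lemma toYP_in:
  assumes M: "M \<in> root_partitions_B r highest_root_B" and r2: "r \<ge> 2"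
  shows "toYP r M \<in> Y r"
proof -
  define a where "a = fst (mab r M)"
  define b where "b = snd (mab r M)"
  have ab: "a \<in> {1..r}" "b \<in> {1..r}" using mabM[OF M r2] by (auto simp: a_def b_def)
  have da: "\<forall>i. toYP r M i (r+1) = (if i = a then 1 else 0)" using toYP_sinks(1)[OF M r2] by (simp add: a_def)
  have db: "\<forall>i. toYP r M i (r+2) = (if i = b then 1 else 0)" using toYP_sinks(2)[OF M r2] by (simp add: b_def)
  have sup: "\<forall>i j. toYP r M i j \<noteq> 0 \<longrightarrow> 1 \<le> i \<and> i \<le> r \<and> i < j \<and> j \<le> r+2"
    by (auto simp: toYP_def split: if_splits)
  have cM: "(\<lambda>k. \<Sum>\<^sub># (image_mset (\<lambda>v. v k) M)) = highest_root_B"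
    using M unfolding root_partitions_B_def by auto
  have cons: "(\<Sum>j\<in>{n<..r+2}. toYP r M n j) = (if n \<le> 2 then 1 else 0) + (\<Sum>i\<in>{1..<n}. toYP r M i n)"
    if n: "n \<in> {1..r}" for n
  proof -
    have "highest_root_B n = (\<Sum>v\<in>#M. v n)" using fun_cong[OF cM, of n] by simp
    also have "\<dots> = (\<Sum>v\<in>#(\<Sum>p\<in>Pr r. replicate_mset (count M (root (fst p) (snd p))) (root (fst p) (snd p)))
     + SS a b. v n)" using decompM[OF M r2] unfolding a_def b_def by simp
    also have "\<dots> = (\<Sum>p\<in>Pr r. int (count M (root (fst p) (snd p))) * root (fst p) (snd p) n) + eps a n + eps b n"
      by (rule coord_sum)
    also have "\<dots> = (\<Sum>p\<in>Pr r. int (toYP r M (fst p) (snd p)) * root (fst p) (snd p) n) + eps a n + eps b n"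
      by (simp add: toYP_Pr cong: sum.cong)
    finally show ?thesis using cons_equiv[OF n r2 da db] by simp
  qed
  show ?thesis unfolding Y_def mem_Collect_eq using ab da db sup cons by blast
qed

theorem mainTheorem11:
  fixes r :: nat
  assumes "r \<ge> 2"
  shows "(\<exists>f. bij_betw f (root_partitions_B r highest_root_B) (JS state11 state11 r))
         \<and> K_B r highest_root_B = js state11 state11 r"
proof -
  have b1: "bij_betw (toYP r) (root_partitions_B r highest_root_B) (Y r)"
    by (rule bij_betw_byWitness[where f'="toP r"])
       (use assms toP_toYP toYP_toP toYP_in toP_in in auto)
  have b2: "bij_betw (toJS r) (Y r) (JS state11 state11 r)"
    by (rule bij_betw_byWitness[where f'="toY r"])
       (use assms toY_toJS toJS_toY toJS_in toY_in in auto)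
  have b: "bij_betw (toJS r \<circ> toYP r) (root_partitions_B r highest_root_B) (JS state11 state11 r)"
    by (rule bij_betw_trans[OF b1 b2])
  then have "card (root_partitions_B r highest_root_B) = card (JS state11 state11 r)"
    by (rule bij_betw_same_card)
  then show ?thesis using b unfolding K_B_def js_def by blast
qed


end
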